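(* In the one-dimensional perturbed elephant random walk with stops, suppose $\epsilon+r\neq1$ and $\gamma=\frac{1-\epsilon r}{2}$. Then for all $t\ge1$ $$\mathbb{E}[X_t^2]=\frac{t}{r(\epsilon+r)}-\frac{r\,\Gamma(t+1-\epsilon-r)}{(\epsilon+r)(\epsilon+r-\epsilon r)\Gamma(1-\epsilon-r)\Gamma(t)}-\frac{1}{\Gamma(1-\epsilon r)}\Big[\frac{1}{r(\epsilon+r)}-\frac{r}{(\epsilon+r)(\epsilon+r-\epsilon r)}\Big]\frac{\Gamma(t+1-\epsilon r)}{\Gamma(t)},$$ and hence $\displaystyle\lim_{t\to\infty}\frac{\mathbb{E}[X_t^2]}{t}=\frac{1}{r(\epsilon+r)}$.
   Context: One-dimensional perturbed elephant random walk with stops (perturbed ERWS): fix $p,q,r\in(0,1)$ with $p+q+r=1$, $\epsilon\in(0,1)$ and $s\in(0,1)$, and set $\gamma=p-q$. The steps $\sigma_1,\sigma_2,\dots$ take values in $\{-1,0,1\}$, $X_0=0$ and $X_t=\sigma_1+\dots+\sigma_t$. The first step satisfies $P(\sigma_1=1)=s$, $P(\sigma_1=-1)=1-s$. For $t\ge1$, conditionally on $\sigma_1,\dots,\sigma_t$, an index $k\in\{1,\dots,t\}$ is chosen uniformly at random. If $\sigma_k=\pm1$, then $\sigma_{t+1}=\sigma_k$ with probability $p$, $\sigma_{t+1}=-\sigma_k$ with probability $q$, and $\sigma_{t+1}=0$ with probability $r$. If $\sigma_k=0$, then $\sigma_{t+1}=1$ with probability $\epsilon/2$, $\sigma_{t+1}=-1$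 with probability $\epsilon/2$, and $\sigma_{t+1}=0$ with probability $1-\epsilon$. *)

theory Defs
  imports "HOL-Analysis.Analysis" "HOL-Probability.Probability"
begin

definition erws_first :: "real \<Rightarrow> int pmf" where
  "erws_first s = pmf_of_list [(1, s), (-1, 1 - s)]"

definition erws_next :: "real \<Rightarrow> real \<Rightarrow> real \<Rightarrow> real \<Rightarrow> int \<Rightarrow> int pmf" where
  "erws_next p q r \<epsilon> x =
     (if x = 0 then pmf_of_list [(1, \<epsilon> / 2), (-1, \<epsilon> / 2), (0, 1 - \<epsilon>)]
      else pmf_of_list [(x, p), (-x, q), (0, r)])"

fun erws_hist :: "real \<Rightarrow> real \<Rightarrow> real \<Rightarrow> real \<Rightarrow> real \<Rightarrow> nat \<Rightarrow> int list pmf" where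
  "erws_hist p q r \<epsilon> s 0 = return_pmf []"
| "erws_hist p q r \<epsilon> s (Suc 0) = map_pmf (\<lambda>x. [x]) (erws_first s)"
| "erws_hist p q r \<epsilon> s (Suc (Suc n)) =
     bind_pmf (erws_hist p q r \<epsilon> s (Suc n)) (\<lambda>h.
       bind_pmf (pmf_of_set {..<length h}) (\<lambda>k.
         map_pmf (\<lambda>x. h @ [x]) (erws_next p q r \<epsilon> (h ! k))))"

definition erws_second_moment :: "real \<Rightarrow> real \<Rightarrow> real \<Rightarrow> real \<Rightarrow> real \<Rightarrow> nat \<Rightarrow> real" where
  "erws_second_moment p q r \<epsilon> s t =
     measure_pmf.expectation (erws_hist p q r \<epsilon> s t) (\<lambda>h. (real_of_int (sum_list h))^2)"

end

theory Submission
  imports Defs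
begin


definition H :: "nat \<Rightarrow> int list set" where
  "H t = {h. set h \<subseteq> {-1,0,1} \<and> length h = t}"

lemma finite_H: "finite (H t)"
  unfolding H_def by (rule finite_lists_length_eq) simp

lemma wf_first: "0 \<le> (s::real) \<Longrightarrow> s \<le> 1 \<Longrightarrow> pmf_of_list_wf [(1::int, s), (-1, 1 - s)]"
  by (auto simp: pmf_of_list_wf_def)

lemma wf_next0: "0 \<le> (\<epsilon>::real) \<Longrightarrow> \<epsilon> \<le> 1 \<Longrightarrow> pmf_of_list_wf [(1::int, \<epsilon> / 2), (-1, \<epsilon> / 2), (0, 1 - \<epsilon>)]"
  by (auto simp: pmf_of_list_wf_def)

lemma wf_next1: "0 \<le> (p::real) \<Longrightarrow> 0 \<le> q \<Longrightarrow> 0 \<le> r \<Longrightarrow> p + q + r = 1 \<Longrightarrow> pmf_of_list_wf [(x::int, p), (-x, q), (0, r)]"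
  by (auto simp: pmf_of_list_wf_def add.assoc)

lemma set_next:
  assumes "0 \<le> p" "0 \<le> q" "0 \<le> r" "p + q + r = 1" "0 \<le> \<epsilon>" "\<epsilon> \<le> 1" "x \<in> {-1,0,1}"
  shows "set_pmf (erws_next p q r \<epsilon> x) \<subseteq> {-1,0,1}"
proof (cases "x = 0")
  case True thus ?thesis using set_pmf_of_list[OF wf_next0[OF assms(5,6)]]
    by (auto simp: erws_next_def)
next
  case False thus ?thesis using set_pmf_of_list[OF wf_next1[OF assms(1-4), of x]] assms(7)
    by (auto simp: erws_next_def)
qed

lemma set_hist:
  assumes "0 \<le> p" "0 \<le> q" "0 \<le> r" "p + q + r = 1" "0 \<le> \<epsilon>" "\<epsilon> \<le> 1" "0 \<le> s" "s \<le> 1"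
  shows "set_pmf (erws_hist p q r \<epsilon> s t) \<subseteq> H t"
proof (induction t)
  case 0
  then show ?case by (simp add: H_def)
next
  case (Suc n)
  show ?case
  proof (cases n)
    case 0
    then show ?thesis using set_pmf_of_list[OF wf_first[OF assms(7,8)]]
      by (auto simp: H_def erws_first_def)
  next
    case (Suc m)
    show ?thesis
    proof
      fix h' assume "h' \<in> set_pmf (erws_hist p q r \<epsilon> s (Suc n))"
      then obtain h k x where h: "h \<in> set_pmf (erws_hist p q r \<epsilon> s n)" and
        k0: "k \<in> set_pmf (pmf_of_set {..<length h})" and x: "x \<in> set_pmf (erws_next p q r \<epsilon> (h ! k))" and h': "h' = h @ [x]"
        using Suc by auto
      have hH: "h \<in> H n" using h Suc.IH by blast
      hence "length h > 0" using Suc by (auto simp: H_def)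
      hence k: "k < length h" using k0 by (subst (asm) set_pmf_of_set) auto
      moreover have "h ! k \<in> {-1,0,1}" using hH nth_mem[OF k] unfolding H_def by blast
      hence "x \<in> {-1,0,1}" using set_next[OF assms(1-6)] x by blast
      ultimately show "h' \<in> H (Suc n)" using hH h' by (auto simp: H_def)
    qed
  qed
qed

lemma exp3:
  fixes f :: "int \<Rightarrow> real"
  assumes "pmf_of_list_wf [(a, w1), (b, w2), (c, w3)]" "a \<noteq> b" "a \<noteq> c" "b \<noteq> c"
  shows "measure_pmf.expectation (pmf_of_list [(a, w1), (b, w2), (c, w3)]) f = w1 * f a + w2 * f b + w3 * f c"
proof -
  have "measure_pmf.expectation (pmf_of_list [(a, w1), (b, w2), (c, w3)]) f =
     (\<Sum>x\<in>{a,b,c}. pmf (pmf_of_list [(a, w1), (b, w2), (c, w3)]) x *\<^sub>R f x)"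
    using set_pmf_of_list[OF assms(1)] by (intro integral_measure_pmf) auto
  also have "\<dots> = w1 * f a + w2 * f b + w3 * f c"
    using assms by (simp add: pmf_pmf_of_list)
  finally show ?thesis .
qed

lemma exp_next:
  fixes f :: "int \<Rightarrow> real"
  assumes "0 \<le> p" "0 \<le> q" "0 \<le> r" "p + q + r = 1" "0 \<le> \<epsilon>" "\<epsilon> \<le> 1"
  shows "measure_pmf.expectation (erws_next p q r \<epsilon> x) f =
    (if x = 0 then \<epsilon>/2 * f 1 + \<epsilon>/2 * f (-1) + (1 - \<epsilon>) * f 0
     else p * f x + q * f (-x) + r * f 0)"
proof (cases "x = 0")
  case True thus ?thesis using exp3[OF wf_next0[OF assms(5,6)]] by (simp add: erws_next_def)
next
  case False thus ?thesis using exp3[OF wf_next1[OF assms(1-4), of x]] by (simp add: erws_next_def)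
qed

lemma exp_step:
  fixes g :: "int list \<Rightarrow> real"
  assumes "0 \<le> p" "0 \<le> q" "0 \<le> r" "p + q + r = 1" "0 \<le> \<epsilon>" "\<epsilon> \<le> 1" "0 \<le> s" "s \<le> 1"
    and "t \<ge> 1"
  shows "measure_pmf.expectation (erws_hist p q r \<epsilon> s (Suc t)) g =
    measure_pmf.expectation (erws_hist p q r \<epsilon> s t)
      (\<lambda>h. (\<Sum>k<length h. measure_pmf.expectation (erws_next p q r \<epsilon> (h ! k)) (\<lambda>x. g (h @ [x]))) / real (length h))"
proof -
  obtain m where t: "t = Suc m" using assms(9) by (cases t) auto
  have fin_next: "finite (set_pmf (erws_next p q r \<epsilon> x))" for x
    using set_next[OF assms(1-6), of 0] set_next[OF assms(1-6), of 1]
    by (cases "x = 0") (auto simp: erws_next_def intro: finite_set_pmf_of_list wf_next0 wf_next1 assms)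
  let ?P = "erws_hist p q r \<epsilon> s t"
  let ?I = "\<lambda>h. bind_pmf (pmf_of_set {..<length h}) (\<lambda>k.
         map_pmf (\<lambda>x. h @ [x]) (erws_next p q r \<epsilon> (h ! k)))"
  have "measure_pmf.expectation (erws_hist p q r \<epsilon> s (Suc t)) g =
        measure_pmf.expectation (bind_pmf ?P ?I) g" by (simp add: t)
  also have "\<dots> = (\<Sum>h\<in>H t. pmf ?P h *\<^sub>R measure_pmf.expectation (?I h) g)"
  proof (rule pmf_expectation_bind[OF finite_H])
    fix h assume "h \<in> H t"
    hence "length h > 0" using t by (auto simp: H_def)
    hence "set_pmf (pmf_of_set {..<length h}) = {..<length h}" by (intro set_pmf_of_set) auto
    thus "finite (set_pmf (?I h))" using fin_next by auto
  qed (rule set_hist[OF assms(1-8)])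
  also have "\<dots> = (\<Sum>h\<in>H t. pmf ?P h *\<^sub>R ((\<Sum>k<length h. measure_pmf.expectation (erws_next p q r \<epsilon> (h ! k)) (\<lambda>x. g (h @ [x]))) / real (length h)))"
  proof (rule sum.cong[OF refl])
    fix h assume "h \<in> H t"
    hence "length h > 0" using t by (auto simp: H_def)
    hence "measure_pmf.expectation (?I h) g = (\<Sum>k<length h. measure_pmf.expectation (map_pmf (\<lambda>x. h @ [x]) (erws_next p q r \<epsilon> (h ! k))) g /\<^sub>R real (card {..<length h}))"
      using fin_next by (intro pmf_expectation_bind_pmf_of_set) auto
    also have "\<dots> = (\<Sum>k<length h. measure_pmf.expectation (erws_next p q r \<epsilon> (h ! k)) (\<lambda>x. g (h @ [x]))) / real (length h)"
      by (simp add: sum_divide_distrib divide_inverse_commute sum_distrib_left)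
    finally show "pmf ?P h *\<^sub>R measure_pmf.expectation (?I h) g = pmf ?P h *\<^sub>R ((\<Sum>k<length h. measure_pmf.expectation (erws_next p q r \<epsilon> (h ! k)) (\<lambda>x. g (h @ [x]))) / real (length h))" by simp
  qed
  also have "\<dots> = measure_pmf.expectation ?P
      (\<lambda>h. (\<Sum>k<length h. measure_pmf.expectation (erws_next p q r \<epsilon> (h ! k)) (\<lambda>x. g (h @ [x]))) / real (length h))"
    using set_hist[OF assms(1-8)] by (intro integral_measure_pmf[symmetric] finite_H) auto
  finally show ?thesis .
qed

definition SS :: "int list \<Rightarrow> real" where "SS h = real_of_int (sum_list h)"
definition MM :: "int list \<Rightarrow> real" where "MM h = sum_list (map (\<lambda>y. if y = 0 then 0 else 1) h)"

lemma sum_nth_list: "(\<Sum>k<length h. f (h ! k)) = sum_list (map f h)"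
  by (simp add: sum_list_sum_nth atLeast0LessThan)

lemma sum_list_aux:
  "sum_list (map (\<lambda>y. A + B * real_of_int y + (if y = 0 then e else c)) h)
   = real (length h) * A + B * SS h + e * real (length h) + (c - e) * MM h"
  by (induction h) (auto simp: SS_def MM_def algebra_simps)

lemma sum_list_aux2:
  "sum_list (map (\<lambda>y. A + (if y = 0 then e else c)) h)
   = real (length h) * A + e * real (length h) + (c - e) * MM h"
  by (induction h) (auto simp: MM_def algebra_simps)

lemma exp_fin:
  assumes "0 \<le> p" "0 \<le> q" "0 \<le> r" "p + q + r = 1" "0 \<le> \<epsilon>" "\<epsilon> \<le> 1" "0 \<le> s" "s \<le> 1"
  shows "measure_pmf.expectation (erws_hist p q r \<epsilon> s t) (f :: int list \<Rightarrow> real) =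
    (\<Sum>h\<in>H t. pmf (erws_hist p q r \<epsilon> s t) h * f h)"
  using set_hist[OF assms] by (subst integral_measure_pmf[OF finite_H]) auto

lemma next_sq:
  assumes "0 \<le> p" "0 \<le> q" "0 \<le> r" "p + q + r = 1" "0 \<le> \<epsilon>" "\<epsilon> \<le> 1" "y \<in> {-1,0,1}"
  shows "measure_pmf.expectation (erws_next p q r \<epsilon> y) (\<lambda>x. (A + real_of_int x)^2) =
     A^2 + 2 * (p - q) * A * real_of_int y + (if y = 0 then \<epsilon> else 1 - r)"
proof -
  have hr: "r = 1 - p - q" using assms(4) by simp
  show ?thesis using assms by (subst exp_next[OF assms(1-6)]) (auto simp: power2_eq_square algebra_simps hr add_divide_distrib)
qed

lemma next_M:
  assumes "0 \<le> p" "0 \<le> q" "0 \<le> r" "p + q + r = 1" "0 \<le> \<epsilon>" "\<epsilon> \<le> 1"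
  shows "measure_pmf.expectation (erws_next p q r \<epsilon> y) (\<lambda>x. A + (if x = 0 then 0 else 1)) =
     A + (if y = 0 then \<epsilon> else 1 - r)"
proof -
  have hr: "r = 1 - p - q" using assms(4) by simp
  show ?thesis using assms by (subst exp_next[OF assms(1-6)]) (auto simp: algebra_simps hr)
qed

lemma exp_lin:
  assumes "0 \<le> p" "0 \<le> q" "0 \<le> r" "p + q + r = 1" "0 \<le> \<epsilon>" "\<epsilon> \<le> 1" "0 \<le> s" "s \<le> 1"
  shows "measure_pmf.expectation (erws_hist p q r \<epsilon> s t) (\<lambda>h. c1 * SS h ^ 2 + c2 * MM h + c3) =
    c1 * measure_pmf.expectation (erws_hist p q r \<epsilon> s t) (\<lambda>h. SS h ^ 2)
    + c2 * measure_pmf.expectation (erws_hist p q r \<epsilon> s t) MM + c3"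
proof -
  let ?P = "erws_hist p q r \<epsilon> s t"
  have "(\<Sum>h\<in>H t. pmf ?P h * (c1 * SS h ^ 2 + c2 * MM h + c3)) =
     c1 * (\<Sum>h\<in>H t. pmf ?P h * SS h ^ 2) + c2 * (\<Sum>h\<in>H t. pmf ?P h * MM h) + c3 * (\<Sum>h\<in>H t. pmf ?P h)"
    by (simp add: sum.distrib sum_distrib_left algebra_simps)
  also have "(\<Sum>h\<in>H t. pmf ?P h) = 1" by (rule sum_pmf_eq_1[OF finite_H set_hist[OF assms]])
  finally show ?thesis by (simp add: exp_fin[OF assms])
qed

lemma rec_a:
  assumes "0 \<le> p" "0 \<le> q" "0 \<le> r" "p + q + r = 1" "0 \<le> \<epsilon>" "\<epsilon> \<le> 1" "0 \<le> s" "s \<le> 1"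
    and "t \<ge> 1"
  shows "measure_pmf.expectation (erws_hist p q r \<epsilon> s (Suc t)) (\<lambda>h. SS h ^ 2) =
     (1 + 2 * (p - q) / t) * measure_pmf.expectation (erws_hist p q r \<epsilon> s t) (\<lambda>h. SS h ^ 2)
    + ((1 - r - \<epsilon>) / t) * measure_pmf.expectation (erws_hist p q r \<epsilon> s t) MM + \<epsilon>"
proof -
  let ?P = "erws_hist p q r \<epsilon> s t"
  have "measure_pmf.expectation (erws_hist p q r \<epsilon> s (Suc t)) (\<lambda>h. SS h ^ 2) =
    measure_pmf.expectation ?P
      (\<lambda>h. (\<Sum>k<length h. measure_pmf.expectation (erws_next p q r \<epsilon> (h ! k)) (\<lambda>x. SS (h @ [x]) ^ 2)) / real (length h))"
    by (rule exp_step[OF assms])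
  also have "\<dots> = measure_pmf.expectation ?P (\<lambda>h. (1 + 2 * (p - q) / t) * SS h ^ 2 + ((1 - r - \<epsilon>) / t) * MM h + \<epsilon>)"
    unfolding exp_fin[OF assms(1-8)]
  proof (rule sum.cong[OF refl])
    fix h assume hH: "h \<in> H t"
    hence len: "length h = t" and sub: "set h \<subseteq> {-1,0,1}" by (auto simp: H_def)
    have "(\<Sum>k<length h. measure_pmf.expectation (erws_next p q r \<epsilon> (h ! k)) (\<lambda>x. SS (h @ [x]) ^ 2))
       = (\<Sum>k<length h. SS h ^ 2 + 2 * (p - q) * SS h * real_of_int (h ! k) + (if h ! k = 0 then \<epsilon> else 1 - r))"
    proof (rule sum.cong[OF refl])
      fix k assume "k \<in> {..<length h}"
      hence "h ! k \<in> set h" by (intro nth_mem) simp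
      hence "h ! k \<in> {-1,0,1}" using sub by blast
      thus "measure_pmf.expectation (erws_next p q r \<epsilon> (h ! k)) (\<lambda>x. SS (h @ [x]) ^ 2) =
         SS h ^ 2 + 2 * (p - q) * SS h * real_of_int (h ! k) + (if h ! k = 0 then \<epsilon> else 1 - r)"
        using next_sq[OF assms(1-6), of "h ! k" "SS h"] by (simp add: SS_def)
    qed
    also have "\<dots> = real t * SS h ^ 2 + 2 * (p - q) * SS h * SS h + \<epsilon> * real t + (1 - r - \<epsilon>) * MM h"
      using sum_list_aux[of "SS h ^ 2" "2 * (p - q) * SS h" \<epsilon> "1 - r" h]
        sum_nth_list[of "\<lambda>y. SS h ^ 2 + 2 * (p - q) * SS h * real_of_int y + (if y = 0 then \<epsilon> else 1 - r)" h]
      by (simp add: len power2_eq_square)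
    finally have X: "(\<Sum>k<length h. measure_pmf.expectation (erws_next p q r \<epsilon> (h ! k)) (\<lambda>x. SS (h @ [x]) ^ 2)) = real t * SS h ^ 2 + 2 * (p - q) * SS h * SS h + \<epsilon> * real t + (1 - r - \<epsilon>) * MM h" .
    show "pmf ?P h * ((\<Sum>k<length h. measure_pmf.expectation (erws_next p q r \<epsilon> (h ! k)) (\<lambda>x. SS (h @ [x]) ^ 2)) / real (length h))
       = pmf ?P h * ((1 + 2 * (p - q) / t) * SS h ^ 2 + ((1 - r - \<epsilon>) / t) * MM h + \<epsilon>)"
      unfolding X by (rule arg_cong[where f="\<lambda>z. pmf ?P h * z"]) (use assms(9) in \<open>simp add: len field_simps power2_eq_square\<close>)
  qed
  also have "\<dots> = (1 + 2 * (p - q) / t) * measure_pmf.expectation (erws_hist p q r \<epsilon> s t) (\<lambda>h. SS h ^ 2)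
    + ((1 - r - \<epsilon>) / t) * measure_pmf.expectation (erws_hist p q r \<epsilon> s t) MM + \<epsilon>" by (rule exp_lin[OF assms(1-8)])
  finally show ?thesis .
qed

lemma rec_m:
  assumes "0 \<le> p" "0 \<le> q" "0 \<le> r" "p + q + r = 1" "0 \<le> \<epsilon>" "\<epsilon> \<le> 1" "0 \<le> s" "s \<le> 1"
    and "t \<ge> 1"
  shows "measure_pmf.expectation (erws_hist p q r \<epsilon> s (Suc t)) MM =
     (1 + (1 - r - \<epsilon>) / t) * measure_pmf.expectation (erws_hist p q r \<epsilon> s t) MM + \<epsilon>"
proof -
  let ?P = "erws_hist p q r \<epsilon> s t"
  have "measure_pmf.expectation (erws_hist p q r \<epsilon> s (Suc t)) MM =
    measure_pmf.expectation ?P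
      (\<lambda>h. (\<Sum>k<length h. measure_pmf.expectation (erws_next p q r \<epsilon> (h ! k)) (\<lambda>x. MM (h @ [x]))) / real (length h))"
    by (rule exp_step[OF assms])
  also have "\<dots> = measure_pmf.expectation ?P (\<lambda>h. 0 * SS h ^ 2 + (1 + (1 - r - \<epsilon>) / t) * MM h + \<epsilon>)"
    unfolding exp_fin[OF assms(1-8)]
  proof (rule sum.cong[OF refl])
    fix h assume hH: "h \<in> H t"
    hence len: "length h = t" by (auto simp: H_def)
    have "(\<Sum>k<length h. measure_pmf.expectation (erws_next p q r \<epsilon> (h ! k)) (\<lambda>x. MM (h @ [x])))
       = (\<Sum>k<length h. MM h + (if h ! k = 0 then \<epsilon> else 1 - r))"
    proof (rule sum.cong[OF refl])
      fix k assume "k \<in> {..<length h}"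
      show "measure_pmf.expectation (erws_next p q r \<epsilon> (h ! k)) (\<lambda>x. MM (h @ [x])) =
         MM h + (if h ! k = 0 then \<epsilon> else 1 - r)"
        using next_M[OF assms(1-6), of "h ! k" "MM h"] by (simp add: MM_def)
    qed
    also have "\<dots> = real t * MM h + \<epsilon> * real t + (1 - r - \<epsilon>) * MM h"
      using sum_list_aux2[of "MM h" \<epsilon> "1 - r" h]
        sum_nth_list[of "\<lambda>y. MM h + (if y = 0 then \<epsilon> else 1 - r)" h]
      by (simp add: len)
    finally have X: "(\<Sum>k<length h. measure_pmf.expectation (erws_next p q r \<epsilon> (h ! k)) (\<lambda>x. MM (h @ [x]))) = real t * MM h + \<epsilon> * real t + (1 - r - \<epsilon>) * MM h" .
    show "pmf ?P h * ((\<Sum>k<length h. measure_pmf.expectation (erws_next p q r \<epsilon> (h ! k)) (\<lambda>x. MM (h @ [x]))) / real (length h))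
       = pmf ?P h * (0 * SS h ^ 2 + (1 + (1 - r - \<epsilon>) / t) * MM h + \<epsilon>)"
      unfolding X by (rule arg_cong[where f="\<lambda>z. pmf ?P h * z"]) (use assms(9) in \<open>simp add: len field_simps\<close>)
  qed
  also have "\<dots> = (1 + (1 - r - \<epsilon>) / t) * measure_pmf.expectation (erws_hist p q r \<epsilon> s t) MM + \<epsilon>" by (subst exp_lin[OF assms(1-8)]) simp
  finally show ?thesis .
qed

lemma exp2:
  fixes f :: "int \<Rightarrow> real"
  assumes "pmf_of_list_wf [(a, w1), (b, w2)]" "a \<noteq> b"
  shows "measure_pmf.expectation (pmf_of_list [(a, w1), (b, w2)]) f = w1 * f a + w2 * f b"
proof -
  have "measure_pmf.expectation (pmf_of_list [(a, w1), (b, w2)]) f =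
     (\<Sum>x\<in>{a,b}. pmf (pmf_of_list [(a, w1), (b, w2)]) x *\<^sub>R f x)"
    using set_pmf_of_list[OF assms(1)] by (intro integral_measure_pmf) auto
  also have "\<dots> = w1 * f a + w2 * f b"
    using assms by (simp add: pmf_pmf_of_list)
  finally show ?thesis .
qed

lemma base_a: "0 \<le> s \<Longrightarrow> s \<le> 1 \<Longrightarrow> measure_pmf.expectation (erws_hist p q r \<epsilon> s 1) (\<lambda>h. SS h ^ 2) = 1"
  using exp2[OF wf_first, of s "\<lambda>x. SS [x] ^ 2"] by (simp add: erws_first_def SS_def)

lemma base_m: "0 \<le> s \<Longrightarrow> s \<le> 1 \<Longrightarrow> measure_pmf.expectation (erws_hist p q r \<epsilon> s 1) MM = 1"
  using exp2[OF wf_first, of s "\<lambda>x. MM [x]"] by (simp add: erws_first_def MM_def)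



lemma Gamma_shift:
  fixes t c :: real
  assumes "t + 1 - c > 0"
  shows "Gamma (t + 1 + 1 - c) = (t + 1 - c) * Gamma (t + 1 - c)"
proof -
  have "t + 1 - c \<notin> \<int>\<^sub>\<le>\<^sub>0" using assms by (auto elim!: nonpos_Ints_cases)
  from Gamma_plus1[OF this] show ?thesis by (simp add: algebra_simps)
qed

lemma Gamma_shift0:
  fixes t :: real
  assumes "t > 0"
  shows "Gamma (t + 1) = t * Gamma t"
proof -
  have "t \<notin> \<int>\<^sub>\<le>\<^sub>0" using assms by (auto elim!: nonpos_Ints_cases)
  from Gamma_plus1[OF this] show ?thesis .
qed

lemma base_alg:
  fixes e r G1 G2 :: real
  assumes "r \<noteq> 0" "e + r \<noteq> 0" "e + r - e * r \<noteq> 0" "1 - e - r \<noteq> 0" "G1 \<noteq> 0" "G2 \<noteq> 0"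
  shows "1 = 1/(r*(e+r)) - r*((1-e-r)*G1)/((e+r)*(e+r-e*r)*G1*1) - (1/G2)*(1/(r*(e+r)) - r/((e+r)*(e+r-e*r)))*((1-e*r)*G2/1)"
proof -
  have "r*((1-e-r)*G1)/((e+r)*(e+r-e*r)*G1*1) = r*(1-e-r)/((e+r)*(e+r-e*r))" using assms by simp
  moreover have "(1/G2)*(1/(r*(e+r)) - r/((e+r)*(e+r-e*r)))*((1-e*r)*G2/1) = (1/(r*(e+r)) - r/((e+r)*(e+r-e*r)))*(1-e*r)"
    using assms by simp
  ultimately show ?thesis using assms by (simp add: divide_simps) (simp add: algebra_simps)
qed

lemma step_alg:
  fixes e r x Gt A B g1 g2 aT mT :: real
  assumes "r \<noteq> 0" "e + r \<noteq> 0" "e + r - e * r \<noteq> 0" "1 - e - r \<noteq> 0" "g1 \<noteq> 0" "g2 \<noteq> 0" "x \<noteq> 0" "Gt \<noteq> 0"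
   and ha: "aT = x / (r * (e + r)) - r * A / ((e + r) * (e + r - e * r) * g1 * Gt)
             - (1 / g2) * (1 / (r * (e + r)) - r / ((e + r) * (e + r - e * r))) * (B / Gt)"
   and hm: "mT = e * x / (e + r) + r * A / ((e + r) * (1 - e - r) * g1 * Gt)"
  shows "(1 + (1 - e * r) / x) * aT + ((1 - r - e) / x) * mT + e =
     (x + 1) / (r * (e + r)) - r * ((x + 1 - e - r) * A) / ((e + r) * (e + r - e * r) * g1 * (x * Gt))
             - (1 / g2) * (1 / (r * (e + r)) - r / ((e + r) * (e + r - e * r))) * ((x + 1 - e * r) * B / (x * Gt))"
    and "(1 + (1 - r - e) / x) * mT + e = e * (x + 1) / (e + r) + r * ((x + 1 - e - r) * A) / ((e + r) * (1 - e - r) * g1 * (x * Gt))"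
  unfolding ha hm using assms(1-8) by (simp_all add: divide_simps) (simp_all add: algebra_simps)

lemma solve:
  fixes a m :: "nat \<Rightarrow> real" and \<epsilon> r :: real
  assumes e: "0 < \<epsilon>" "\<epsilon> < 1" and r: "0 < r" "r < 1" and c1: "\<epsilon> + r \<noteq> 1"
    and a1: "a 1 = 1" and m1: "m 1 = 1"
    and ms: "\<And>t. t \<ge> 1 \<Longrightarrow> m (Suc t) = (1 + (1 - r - \<epsilon>) / t) * m t + \<epsilon>"
    and as: "\<And>t. t \<ge> 1 \<Longrightarrow> a (Suc t) = (1 + (1 - \<epsilon> * r) / t) * a t + ((1 - r - \<epsilon>) / t) * m t + \<epsilon>"
    and t: "t \<ge> 1"
  shows "a t = real t / (r * (\<epsilon> + r))
             - r * Gamma (real t + 1 - \<epsilon> - r)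
               / ((\<epsilon> + r) * (\<epsilon> + r - \<epsilon> * r) * Gamma (1 - \<epsilon> - r) * Gamma (real t))
             - (1 / Gamma (1 - \<epsilon> * r))
               * (1 / (r * (\<epsilon> + r)) - r / ((\<epsilon> + r) * (\<epsilon> + r - \<epsilon> * r)))
               * (Gamma (real t + 1 - \<epsilon> * r) / Gamma (real t))
      \<and> m t = \<epsilon> * real t / (\<epsilon> + r) + r * Gamma (real t + 1 - \<epsilon> - r)
               / ((\<epsilon> + r) * (1 - \<epsilon> - r) * Gamma (1 - \<epsilon> - r) * Gamma (real t))"
proof -
  have er: "\<epsilon> * r < 1" using e r by (metis mult_strict_mono' less_eq_real_def mult_1 )
  have nz: "z \<noteq> 0 \<Longrightarrow> z > -1 \<Longrightarrow> z \<notin> \<int>\<^sub>\<le>\<^sub>0" for z :: real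
    by (auto elim!: nonpos_Ints_cases)
  have ng1: "1 - \<epsilon> - r \<notin> \<int>\<^sub>\<le>\<^sub>0" by (rule nz) (use e r c1 in auto)
  have ng2: "1 - \<epsilon> * r \<notin> \<int>\<^sub>\<le>\<^sub>0" by (rule nz) (use er e r in auto)
  have g1: "Gamma (1 - \<epsilon> - r) \<noteq> 0"
    using ng1 by (auto simp: Gamma_eq_zero_iff)
  have g2: "Gamma (1 - \<epsilon> * r) > 0" using er by simp
  have s1: "Gamma (real (1::nat) + 1 - \<epsilon> - r) = (1 - \<epsilon> - r) * Gamma (1 - \<epsilon> - r)"
  proof -
    have "Gamma ((1 - \<epsilon> - r) + 1) = (1 - \<epsilon> - r) * Gamma (1 - \<epsilon> - r)"
      using ng1 by (intro Gamma_plus1)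
    moreover have "real (1::nat) + 1 - \<epsilon> - r = (1 - \<epsilon> - r) + 1" by simp
    ultimately show ?thesis by metis
  qed
  have s2: "Gamma (real (1::nat) + 1 - \<epsilon> * r) = (1 - \<epsilon> * r) * Gamma (1 - \<epsilon> * r)"
  proof -
    have "Gamma ((1 - \<epsilon> * r) + 1) = (1 - \<epsilon> * r) * Gamma (1 - \<epsilon> * r)"
      using ng2 by (intro Gamma_plus1)
    moreover have "real (1::nat) + 1 - \<epsilon> * r = (1 - \<epsilon> * r) + 1" by simp
    ultimately show ?thesis by metis
  qed
  have c0: "\<epsilon> + r - \<epsilon> * r > 0" using e r by (smt (verit) mult_pos_pos mult_less_cancel_left1)
  show ?thesis using t
  proof (induction t rule: nat_induct_at_least)
    case base
    have "1 = real (1::nat) / (r * (\<epsilon> + r))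
             - r * ((1 - \<epsilon> - r) * Gamma (1 - \<epsilon> - r)) / ((\<epsilon> + r) * (\<epsilon> + r - \<epsilon> * r) * Gamma (1 - \<epsilon> - r) * Gamma (real (1::nat)))
             - (1 / Gamma (1 - \<epsilon> * r)) * (1 / (r * (\<epsilon> + r)) - r / ((\<epsilon> + r) * (\<epsilon> + r - \<epsilon> * r)))
               * ((1 - \<epsilon> * r) * Gamma (1 - \<epsilon> * r) / Gamma (real (1::nat)))"
      using base_alg[of r \<epsilon> "Gamma (1 - \<epsilon> - r)" "Gamma (1 - \<epsilon> * r)"] g1 g2 c0 e r c1 by simp
    moreover have "1 = \<epsilon> * real (1::nat) / (\<epsilon> + r) + r * ((1 - \<epsilon> - r) * Gamma (1 - \<epsilon> - r))
               / ((\<epsilon> + r) * (1 - \<epsilon> - r) * Gamma (1 - \<epsilon> - r) * Gamma (real (1::nat)))"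
      using g1 e r c1 by (simp add: divide_simps)
    ultimately show ?case unfolding s1 s2 a1 m1 by simp
  next
    case (Suc t)
    have t0: "real t > 0" using Suc.hyps by simp
    have e1: "real (Suc t) = real t + 1" by simp
    have e2: "Gamma (real (Suc t)) = real t * Gamma (real t)"
      using Gamma_shift0[OF t0] by (simp add: add.commute)
    have e3: "Gamma (real (Suc t) + 1 - \<epsilon> - r) = (real t + 1 - \<epsilon> - r) * Gamma (real t + 1 - \<epsilon> - r)"
      using Gamma_shift[of "real t" "\<epsilon> + r"] Suc.hyps e r by (simp add: algebra_simps)
    have e4: "Gamma (real (Suc t) + 1 - \<epsilon> * r) = (real t + 1 - \<epsilon> * r) * Gamma (real t + 1 - \<epsilon> * r)"
      using Gamma_shift[of "real t" "\<epsilon> * r"] Suc.hyps er by (simp add: algebra_simps)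
    have gt: "Gamma (real t) \<noteq> 0" using Gamma_real_pos[OF t0] by linarith
    note sa = step_alg[OF _ _ _ _ _ _ _ _ conjunct1[OF Suc.IH] conjunct2[OF Suc.IH]]
    show ?case unfolding e2 e3 e4 unfolding as[OF Suc.hyps] ms[OF Suc.hyps] e1
      using sa g1 g2 c0 e r c1 t0 gt by simp
  qed
qed



lemma exp_ln_lim: "c > 0 \<Longrightarrow> (\<lambda>n::nat. exp (- c * ln (real n))) \<longlonglongrightarrow> 0"
proof -
  assume c: "c > 0"
  have "(\<lambda>n::nat. real n powr (- c)) \<longlonglongrightarrow> 0"
    using c by (intro tendsto_neg_powr filterlim_real_sequentially) auto
  thus ?thesis
  proof (rule Lim_transform_eventually)
    show "\<forall>\<^sub>F n in sequentially. real n powr (- c) = exp (- c * ln (real n))"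
      using eventually_ge_at_top[of "1::nat"] by eventually_elim (simp add: powr_def)
  qed
qed

lemma Gamma_ratio_lim:
  fixes c :: real
  assumes c: "c > 0" "- c \<notin> \<int>\<^sub>\<le>\<^sub>0" "c < 2"
  shows "(\<lambda>n::nat. Gamma (real n + 1 - c) / Gamma (real n) / real n) \<longlonglongrightarrow> 0"
proof -
  have G0: "Gamma (- c) \<noteq> 0" using c by (simp add: Gamma_eq_zero_iff)
  have L: "(\<lambda>n. exp (- c * ln (real n)) * (Gamma (- c) / Gamma_series (- c) n)) \<longlonglongrightarrow> 0 * (Gamma (-c) / Gamma (- c))"
    by (intro tendsto_intros exp_ln_lim c Gamma_series_LIMSEQ G0)
  have L': "(\<lambda>n. exp (- c * ln (real n)) * (Gamma (- c) / Gamma_series (- c) n)) \<longlonglongrightarrow> 0"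
    using L by (metis mult_zero_left)
  show ?thesis
  proof (rule Lim_transform_eventually[OF L'])
    show "\<forall>\<^sub>F n in sequentially. exp (- c * ln (real n)) * (Gamma (- c) / Gamma_series (- c) n) =
       Gamma (real n + 1 - c) / Gamma (real n) / real n"
      using eventually_ge_at_top[of "1::nat"]
    proof eventually_elim
      case (elim n)
      have n0: "real n > 0" using elim by simp
      have P: "pochhammer (- c) (n + 1) = Gamma (- c + real (n + 1)) / Gamma (- c)"
        by (rule pochhammer_Gamma) (use c in simp)
      have Pnz: "pochhammer (- c) (n + 1) \<noteq> 0"
        using c(2) pochhammer_eq_0_imp_nonpos_Int by blast
      have Gn: "Gamma (real n + 1) = real n * Gamma (real n)"
      proof (rule Gamma_plus1)
        show "real n \<notin> \<int>\<^sub>\<le>\<^sub>0" using n0 by (auto elim!: nonpos_Ints_cases)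
      qed
      have Gf: "Gamma (real n + 1) = fact n" using Gamma_fact[of n] by (simp add: add.commute)
      have gs: "Gamma_series (- c) n = fact n * exp (- c * ln (real n)) / pochhammer (- c) (n + 1)"
        by (simp add: Gamma_series_def)
      have "Gamma (real n + 1 - c) = pochhammer (- c) (n + 1) * Gamma (- c)"
        using P G0 by (simp add: algebra_simps)
      thus ?case unfolding gs using Gn Gf Pnz G0 n0
        by (simp add: field_simps)
    qed
  qed
qed

lemma lim_alg:
  fixes x Y R r G D g1 Gt K G' :: real
  assumes "x \<noteq> 0" "Y = x / R - r * G / (D * g1 * Gt) - K * (G' / Gt)"
  shows "1 / R - (r / (D * g1)) * (G / Gt / x) - K * (G' / Gt / x) = Y / x"
  unfolding assms(2) using assms(1) by (simp add: divide_inverse inverse_mult_distrib algebra_simps)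

theorem mainTheorem8:
  fixes p q r \<epsilon> s :: real
  assumes "0 < p" "p < 1" "0 < q" "q < 1" "0 < r" "r < 1" "p + q + r = 1"
    and "0 < \<epsilon>" "\<epsilon> < 1" "0 < s" "s < 1"
    and "\<epsilon> + r \<noteq> 1"
    and "p - q = (1 - \<epsilon> * r) / 2"
  shows "(\<forall>t::nat. t \<ge> 1 \<longrightarrow>
           erws_second_moment p q r \<epsilon> s t =
             real t / (r * (\<epsilon> + r))
             - r * Gamma (real t + 1 - \<epsilon> - r)
               / ((\<epsilon> + r) * (\<epsilon> + r - \<epsilon> * r) * Gamma (1 - \<epsilon> - r) * Gamma (real t))
             - (1 / Gamma (1 - \<epsilon> * r))
               * (1 / (r * (\<epsilon> + r)) - r / ((\<epsilon> + r) * (\<epsilon> + r - \<epsilon> * r)))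
               * (Gamma (real t + 1 - \<epsilon> * r) / Gamma (real t)))
         \<and> ((\<lambda>t. erws_second_moment p q r \<epsilon> s t / real t)
              \<longlonglongrightarrow> 1 / (r * (\<epsilon> + r)))"
proof -
  have P: "0 \<le> p" "0 \<le> q" "0 \<le> r" "p + q + r = 1" "0 \<le> \<epsilon>" "\<epsilon> \<le> 1" "0 \<le> s" "s \<le> 1"
    using assms by auto
  define a where "a t = erws_second_moment p q r \<epsilon> s t" for t
  define m where "m t = measure_pmf.expectation (erws_hist p q r \<epsilon> s t) MM" for t
  have aE: "a t = measure_pmf.expectation (erws_hist p q r \<epsilon> s t) (\<lambda>h. SS h ^ 2)" for t
    by (simp add: a_def erws_second_moment_def SS_def)
  have pq: "2 * (p - q) = 1 - \<epsilon> * r" using assms(13) by simp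
  have sol: "a t = real t / (r * (\<epsilon> + r))
             - r * Gamma (real t + 1 - \<epsilon> - r)
               / ((\<epsilon> + r) * (\<epsilon> + r - \<epsilon> * r) * Gamma (1 - \<epsilon> - r) * Gamma (real t))
             - (1 / Gamma (1 - \<epsilon> * r))
               * (1 / (r * (\<epsilon> + r)) - r / ((\<epsilon> + r) * (\<epsilon> + r - \<epsilon> * r)))
               * (Gamma (real t + 1 - \<epsilon> * r) / Gamma (real t))" if t: "t \<ge> 1" for t
  proof (rule conjunct1[OF solve[where a = a and m = m]])
    show "a 1 = 1" unfolding aE by (rule base_a) (use assms in auto)
    show "m 1 = 1" unfolding m_def by (rule base_m) (use assms in auto)
    show "m (Suc t) = (1 + (1 - r - \<epsilon>) / real t) * m t + \<epsilon>" if "t \<ge> 1" for t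
      unfolding m_def by (rule rec_m[OF P that])
    show "a (Suc t) = (1 + (1 - \<epsilon> * r) / real t) * a t + ((1 - r - \<epsilon>) / real t) * m t + \<epsilon>" if "t \<ge> 1" for t
      unfolding aE m_def using rec_a[OF P that, unfolded pq] by simp
  qed (use assms t in auto)
  show ?thesis
  proof (intro conjI)
    define C1 where "C1 = r / ((\<epsilon> + r) * (\<epsilon> + r - \<epsilon> * r) * Gamma (1 - \<epsilon> - r))"
    define C2 where "C2 = (1 / Gamma (1 - \<epsilon> * r)) * (1 / (r * (\<epsilon> + r)) - r / ((\<epsilon> + r) * (\<epsilon> + r - \<epsilon> * r)))"
    have er: "\<epsilon> * r < 1" using assms by (metis mult_strict_mono' less_eq_real_def mult_1)
    have nz1: "- (\<epsilon> + r) \<notin> \<int>\<^sub>\<le>\<^sub>0"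
    proof
      assume "- (\<epsilon> + r) \<in> \<int>\<^sub>\<le>\<^sub>0"
      then obtain n :: nat where "- (\<epsilon> + r) = - real n" by (auto elim!: nonpos_Ints_cases')
      hence "\<epsilon> + r = real n" by simp
      moreover have "\<epsilon> + r > 0" "\<epsilon> + r < 2" using assms by auto
      ultimately have "n = 1" by (cases n) auto 
      thus False using \<open>\<epsilon> + r = real n\<close> assms(12) by simp
    qed
    have nz2: "- (\<epsilon> * r) \<notin> \<int>\<^sub>\<le>\<^sub>0"
    proof
      assume "- (\<epsilon> * r) \<in> \<int>\<^sub>\<le>\<^sub>0"
      then obtain n :: nat where "- (\<epsilon> * r) = - real n" by (auto elim!: nonpos_Ints_cases')
      hence "\<epsilon> * r = real n" by simp
      moreover have "\<epsilon> * r > 0" using assms by auto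
      ultimately show False using er by (cases n) auto
    qed
    have L1: "(\<lambda>n::nat. Gamma (real n + 1 - (\<epsilon> + r)) / Gamma (real n) / real n) \<longlonglongrightarrow> 0"
      by (rule Gamma_ratio_lim) (use assms nz1 in auto)
    have L2: "(\<lambda>n::nat. Gamma (real n + 1 - \<epsilon> * r) / Gamma (real n) / real n) \<longlonglongrightarrow> 0"
      by (rule Gamma_ratio_lim) (use assms nz2 er in auto)
    have L: "(\<lambda>n. 1 / (r * (\<epsilon> + r)) - C1 * (Gamma (real n + 1 - (\<epsilon> + r)) / Gamma (real n) / real n)
              - C2 * (Gamma (real n + 1 - \<epsilon> * r) / Gamma (real n) / real n)) \<longlonglongrightarrow> 1 / (r * (\<epsilon> + r)) - C1 * 0 - C2 * 0"
      by (intro tendsto_intros L1 L2)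
    show "(\<lambda>t. erws_second_moment p q r \<epsilon> s t / real t) \<longlonglongrightarrow> 1 / (r * (\<epsilon> + r))"
    proof (rule Lim_transform_eventually[OF L[unfolded mult_zero_right diff_zero]])
      show "\<forall>\<^sub>F n in sequentially. 1 / (r * (\<epsilon> + r)) - C1 * (Gamma (real n + 1 - (\<epsilon> + r)) / Gamma (real n) / real n)
              - C2 * (Gamma (real n + 1 - \<epsilon> * r) / Gamma (real n) / real n) = erws_second_moment p q r \<epsilon> s n / real n"
        using eventually_ge_at_top[of "1::nat"]
      proof eventually_elim
        case (elim n)
        have n0: "real n > 0" using elim by simp
        have ar: "real n + 1 - (\<epsilon> + r) = real n + 1 - \<epsilon> - r" by simp
        show ?case unfolding ar C1_def C2_def
          by (rule lim_alg[OF _ sol[OF elim, unfolded a_def]]) (use n0 in simp)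
      qed
    qed
  qed (use sol in \<open>simp add: a_def\<close>)
qed

end
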